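(* Let $n\geq 2$ and let $\nu,\tilde\nu$ be real numbers with $\nu^2+\tilde\nu^2>0$. Then for any $z_0$, the h-sphere $S^{2n}\!\left(z_0;\dfrac{\nu}{\nu^2+\tilde\nu^2},\dfrac{-\tilde\nu}{\nu^2+\tilde\nu^2}\right)$ in $(\mathbb{R}^{2n+2},g,J)$ has constant totally real sectional curvatures $\nu$ and $\tilde\nu$.
   Context: On $\mathbb{R}^{2n+2}$ with points $Z=(x^1,\dots,x^{n+1};y^1,\dots,y^{n+1})$, let $J(x;y)=(y;-x)$, $g(Z,W)=\sum_k x_Z^kx_W^k-\sum_k y_Z^ky_W^k$, $\tilde g(Z,W)=g(JZ,W)$; this is a flat Kähler manifold with Norden metric. For $z_0$ with position vector $Z_0$ and $(a,b)\neq(0,0)$, the h-sphere is $S^{2n}(z_0;a,b)=\{Z: g(Z-Z_0,Z-Z_0)=a,\ \tilde g(Z-Z_0,Z-Z_0)=b\}$, a $2n$-dimensional submanifold with $J$-invariant tangent spaces on which $g$ is nondegenerate; it carries the induced metric and its Levi-Civita connection $\nabla$. Curvature: $R(X,Y)Z=\nabla_X\nabla_YZ-\nabla_Y\nabla_XZ-\nabla_{[X,Y]}Z$, $R(x,y,z,u)=g(R(x,y)z,u)$, $\tilde R(x,y,z,u)=R(x,y,z,Ju)$, $\pi_1(x,y,z,u)=g(y,z)g(x,u)-g(x,z)g(y,u)$; for a $g$-nondegenerate 2-plane $\beta$ with basis $x,y$, $K(\beta;p)=R(x,y,y,x)/\pi_1(x,y,y,x)$, $\tilde K(\beta;p)=\tilde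 R(x,y,y,x)/\pi_1(x,y,y,x)$; $\beta$ is totally real if $\beta\neq J\beta$, $\beta\perp_gJ\beta$. Constant totally real sectional curvatures $\nu,\tilde\nu$ means $K(\beta;p)=\nu$, $\tilde K(\beta;p)=\tilde\nu$ for all $p$ and all nondegenerate totally real $\beta\subset T_p$. *)

theory Defs
  imports "HOL-Analysis.Analysis"
begin

text \<open>Points of R^(2n+2) are pairs (x;y) with x, y in R^(n+1); here R^(n+1) = real^'m.\<close>

type_synonym 'm pt = "(real^'m) \<times> (real^'m)"

definition Jop :: "'m::finite pt \<Rightarrow> 'm pt" where
  "Jop Z = (snd Z, - fst Z)"

definition gN :: "'m::finite pt \<Rightarrow> 'm pt \<Rightarrow> real" where
  "gN Z W = fst Z \<bullet> fst W - snd Z \<bullet> snd W"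

definition gT :: "'m::finite pt \<Rightarrow> 'm pt \<Rightarrow> real" where
  "gT Z W = gN (Jop Z) W"

definition hsphere :: "'m::finite pt \<Rightarrow> real \<Rightarrow> real \<Rightarrow> 'm pt set" where
  "hsphere Z0 a b = {Z. gN (Z - Z0) (Z - Z0) = a \<and> gT (Z - Z0) (Z - Z0) = b}"

definition tangent_space :: "'m::finite pt set \<Rightarrow> 'm pt \<Rightarrow> 'm pt set" where
  "tangent_space S p = {v. \<exists>\<gamma> e. e > 0 \<and> \<gamma> 0 = p \<and> (\<forall>t\<in>{-e<..<e}. \<gamma> t \<in> S)
                         \<and> (\<gamma> has_vector_derivative v) (at 0)}"

definition tanproj :: "'m::finite pt set \<Rightarrow> 'm pt \<Rightarrow> 'm pt \<Rightarrow> 'm pt" where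
  "tanproj S p w = (THE t. t \<in> tangent_space S p \<and>
                      (\<forall>u\<in>tangent_space S p. gN (w - t) u = 0))"

text \<open>Induced (Levi-Civita) connection of the submanifold: tangential part of the
  ambient flat derivative (Gauss formula).\<close>
definition cov :: "'m::finite pt set \<Rightarrow> ('m pt \<Rightarrow> 'm pt) \<Rightarrow> ('m pt \<Rightarrow> 'm pt) \<Rightarrow> 'm pt \<Rightarrow> 'm pt" where
  "cov S X W p = tanproj S p (frechet_derivative W (at p within S) (X p))"

definition lie :: "'m::finite pt set \<Rightarrow> ('m pt \<Rightarrow> 'm pt) \<Rightarrow> ('m pt \<Rightarrow> 'm pt) \<Rightarrow> 'm pt \<Rightarrow> 'm pt" where
  "lie S X Y p = frechet_derivative Y (at p within S) (X p) - frechet_derivative X (at p within S) (Y p)"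

definition curv :: "'m::finite pt set \<Rightarrow> ('m pt \<Rightarrow> 'm pt) \<Rightarrow> ('m pt \<Rightarrow> 'm pt) \<Rightarrow> ('m pt \<Rightarrow> 'm pt) \<Rightarrow> 'm pt \<Rightarrow> 'm pt" where
  "curv S X Y Z p = cov S X (cov S Y Z) p - cov S Y (cov S X Z) p - cov S (lie S X Y) Z p"

definition C2field :: "('m::finite pt \<Rightarrow> 'm pt) \<Rightarrow> bool" where
  "C2field X \<longleftrightarrow> (\<forall>q. X differentiable (at q)) \<and>
      (\<forall>v q. (\<lambda>r. frechet_derivative X (at r) v) differentiable (at q))"

definition tfield :: "'m::finite pt set \<Rightarrow> ('m pt \<Rightarrow> 'm pt) \<Rightarrow> bool" where
  "tfield S X \<longleftrightarrow> C2field X \<and> (\<forall>p\<in>S. X p \<in> tangent_space S p)"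

definition pi1 :: "'m::finite pt \<Rightarrow> 'm pt \<Rightarrow> 'm pt \<Rightarrow> 'm pt \<Rightarrow> real" where
  "pi1 x y z u = gN y z * gN x u - gN x z * gN y u"

definition Kcurv :: "'m::finite pt set \<Rightarrow> ('m pt \<Rightarrow> 'm pt) \<Rightarrow> ('m pt \<Rightarrow> 'm pt) \<Rightarrow> 'm pt \<Rightarrow> real" where
  "Kcurv S X Y p = gN (curv S X Y Y p) (X p) / pi1 (X p) (Y p) (Y p) (X p)"

definition Ktcurv :: "'m::finite pt set \<Rightarrow> ('m pt \<Rightarrow> 'm pt) \<Rightarrow> ('m pt \<Rightarrow> 'm pt) \<Rightarrow> 'm pt \<Rightarrow> real" where
  "Ktcurv S X Y p = gN (curv S X Y Y p) (Jop (X p)) / pi1 (X p) (Y p) (Y p) (X p)"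

definition nondeg_plane :: "'m::finite pt \<Rightarrow> 'm pt \<Rightarrow> bool" where
  "nondeg_plane x y \<longleftrightarrow> dim (span {x, y}) = 2 \<and>
     (\<forall>u\<in>span {x, y}. (\<forall>w\<in>span {x, y}. gN u w = 0) \<longrightarrow> u = 0)"

definition totally_real :: "'m::finite pt \<Rightarrow> 'm pt \<Rightarrow> bool" where
  "totally_real x y \<longleftrightarrow> span {x, y} \<noteq> span {Jop x, Jop y} \<and>
     (\<forall>u\<in>span {x, y}. \<forall>w\<in>span {Jop x, Jop y}. gN u w = 0)"

definition const_tr_curv :: "'m::finite pt set \<Rightarrow> real \<Rightarrow> real \<Rightarrow> bool" where
  "const_tr_curv S \<nu> \<nu>' \<longleftrightarrow>
     (\<forall>p\<in>S. \<forall>X Y. tfield S X \<and> tfield S Y \<and> nondeg_plane (X p) (Y p) \<and> totally_real (X p) (Y p)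
        \<longrightarrow> Kcurv S X Y p = \<nu> \<and> Ktcurv S X Y p = \<nu>')"

end

theory Submission
  imports Defs
begin

lemma gN_sym: "gN x y = gN y x"
  by (simp add: gN_def inner_commute)
lemma gN_add_left: "gN (x + y) z = gN x z + gN y z"
  by (simp add: gN_def inner_add_left)
lemma gN_add_right: "gN z (x + y) = gN z x + gN z y"
  by (simp add: gN_def inner_add_right)
lemma gN_diff_left: "gN (x - y) z = gN x z - gN y z"
  by (simp add: gN_def inner_diff_left)
lemma gN_diff_right: "gN z (x - y) = gN z x - gN z y"
  by (simp add: gN_def inner_diff_right)
lemma gN_scale_left: "gN (c *\<^sub>R x) z = c * gN x z"
  by (simp add: gN_def algebra_simps)
lemma gN_scale_right: "gN z (c *\<^sub>R x) = c * gN z x"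
  by (simp add: gN_def algebra_simps)
lemma gN_minus_left: "gN (- x) z = - gN x z"
  by (simp add: gN_def)
lemma gN_minus_right: "gN z (- x) = - gN z x"
  by (simp add: gN_def)
lemma gN_zero_left: "gN 0 z = 0" and gN_zero_right: "gN z 0 = 0"
  by (simp_all add: gN_def)
lemmas gN_simps = gN_add_left gN_add_right gN_diff_left gN_diff_right gN_scale_left gN_scale_right
  gN_minus_left gN_minus_right gN_zero_left gN_zero_right

lemma Jop_add: "Jop (x + y) = Jop x + Jop y"
  by (simp add: Jop_def)
lemma Jop_diff: "Jop (x - y) = Jop x - Jop y"
  by (simp add: Jop_def)
lemma Jop_scale: "Jop (c *\<^sub>R x) = c *\<^sub>R Jop x"
  by (simp add: Jop_def)
lemma Jop_minus: "Jop (- x) = - Jop x"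
  by (simp add: Jop_def)
lemma Jop_zero: "Jop 0 = 0"
  by (simp add: Jop_def zero_prod_def)
lemma Jop_Jop: "Jop (Jop x) = - x"
  by (simp add: Jop_def prod_eq_iff)
lemmas Jop_simps = Jop_add Jop_diff Jop_scale Jop_minus Jop_zero Jop_Jop

lemma gN_J_sym: "gN (Jop x) y = gN (Jop y) x"
  by (simp add: gN_def Jop_def inner_commute)
lemma gN_JJ: "gN (Jop x) (Jop y) = - gN x y"
  by (simp add: gN_def Jop_def)
lemma gN_J_right: "gN x (Jop y) = gN (Jop x) y"
  by (metis gN_J_sym gN_sym)

lemma gN_J_swap: "gN x (Jop y) = gN y (Jop x)"
  by (metis gN_J_right gN_J_sym gN_sym)

lemma linear_Jop: "linear Jop"
  by (rule linearI) (simp_all add: Jop_simps)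
lemma bounded_linear_Jop: "bounded_linear (Jop :: 'm::finite pt \<Rightarrow> _)"
  by (metis linear_Jop linear_conv_bounded_linear)

lemma bounded_bilinear_gN: "bounded_bilinear (gN :: 'm::finite pt \<Rightarrow> _)"
proof -
  have "bounded_bilinear (\<lambda>x y::'m pt. inner (id x) ((\<lambda>z. (fst z, - snd z)) y))"
    by (rule bounded_bilinear.comp[OF bounded_bilinear_inner])
       (auto intro!: bounded_linear_Pair bounded_linear_fst bounded_linear_snd bounded_linear_minus bounded_linear_ident)
  moreover have "(\<lambda>x y::'m pt. inner (id x) ((\<lambda>z. (fst z, - snd z)) y)) = gN"
    by (auto simp: fun_eq_iff gN_def inner_prod_def)
  ultimately show ?thesis by simp
qed

lemma gN_nondeg: "(\<And>e. gN d e = 0) \<Longrightarrow> d = 0"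
proof -
  assume h: "\<And>e. gN d e = 0"
  have "gN d (fst d, - snd d) = inner d d" by (simp add: gN_def inner_prod_def)
  then show "d = 0" using h by simp
qed

definition ci :: "'m::finite pt \<Rightarrow> 'm pt \<Rightarrow> complex" where
  "ci U W = Complex (gN U W) (gN (Jop U) W)"
definition cm :: "complex \<Rightarrow> 'm::finite pt \<Rightarrow> 'm pt" where
  "cm w U = Re w *\<^sub>R U - Im w *\<^sub>R Jop U"

lemma ci_cm_left: "ci (cm w U) W = w * ci U W"
  by (simp add: ci_def cm_def complex_eq_iff gN_simps Jop_simps gN_sym)
lemma ci_sym: "ci U W = ci W U"
  by (simp add: ci_def complex_eq_iff gN_sym gN_J_sym) (metis gN_J_swap)
lemma ci_cm_right: "ci W (cm w U) = w * ci W U"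
  by (metis ci_sym ci_cm_left)
lemma ci_add_left: "ci (U + V) W = ci U W + ci V W"
  by (simp add: ci_def complex_eq_iff gN_simps Jop_simps)
lemma ci_add_right: "ci W (U + V) = ci W U + ci W V"
  by (metis ci_sym ci_add_left)
lemma cm_0: "cm 0 U = 0" by (simp add: cm_def)
lemma cm_1: "cm 1 U = U" by (simp add: cm_def)
lemma bounded_linear_cm: "bounded_linear (\<lambda>w. cm w U)"
proof -
  have "linear (\<lambda>w. cm w U)"
    by (rule linearI) (simp_all add: cm_def algebra_simps)
  then show ?thesis by (simp add: linear_conv_bounded_linear)
qed

lemma cm_vector_derivative:
  assumes "(f has_vector_derivative f') (at x)"
  shows "((\<lambda>t. cm (f t) U) has_vector_derivative cm f' U) (at x)"
proof -
  have 1: "(f has_derivative (\<lambda>t. t *\<^sub>R f')) (at x)" using assms by (simp add: has_vector_derivative_def)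
  have 2: "((\<lambda>w. cm w U) has_derivative (\<lambda>w. cm w U)) (at (f x))"
    by (rule bounded_linear_imp_has_derivative[OF bounded_linear_cm])
  have "((\<lambda>t. cm (f t) U) has_derivative (\<lambda>t. cm (t *\<^sub>R f') U)) (at x)"
    using has_derivative_compose[OF 1 2] .
  moreover have "(\<lambda>t. cm (t *\<^sub>R f') U) = (\<lambda>t. t *\<^sub>R cm f' U)"
    by (auto simp: cm_def algebra_simps)
  ultimately show ?thesis by (simp add: has_vector_derivative_def)
qed

lemma alg: fixes c q k z :: complex
  assumes "1 + z\<^sup>2 * k \<noteq> 0" "q = 4*k*c"
  shows "((1 - z\<^sup>2 * k) / (1 + z\<^sup>2 * k)) * ((1 - z\<^sup>2 * k) / (1 + z\<^sup>2 * k)) * c + (z / (1 + z\<^sup>2 * k)) * (z / (1 + z\<^sup>2 * k)) * q = c"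
proof -
  define D where "D = 1 + z\<^sup>2 * k"
  have "((1 - z\<^sup>2 * k) / D) * ((1 - z\<^sup>2 * k) / D) * c + (z / D) * (z / D) * q
     = ((1 - z\<^sup>2 * k) * (1 - z\<^sup>2 * k) * c + z * z * q) / (D * D)"
    by (simp add: add_divide_distrib[symmetric] times_divide_times_eq)
  also have "(1 - z\<^sup>2 * k) * (1 - z\<^sup>2 * k) * c + z * z * q = D * D * c"
    unfolding D_def assms(2) by (simp add: algebra_simps power2_eq_square)
  finally show ?thesis using assms(1) unfolding D_def by simp
qed

lemma curve_exists:
  fixes N v :: "'m::finite pt"
  assumes c: "ci N N \<noteq> 0" and o: "ci N v = 0"
  shows "\<exists>\<gamma> e. e > 0 \<and> \<gamma> 0 = N \<and> (\<forall>t\<in>{-e<..<e}. ci (\<gamma> t) (\<gamma> t) = ci N N)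
            \<and> (\<gamma> has_vector_derivative v) (at 0)"
proof -
  define c where "c = ci N N"
  define k where "k = ci v v / (4 * c)"
  define L where "L = (\<lambda>z::complex. (1 - z\<^sup>2 * k) / (1 + z\<^sup>2 * k))"
  define M where "M = (\<lambda>z::complex. z / (1 + z\<^sup>2 * k))"
  define \<gamma> where "\<gamma> = (\<lambda>t::real. cm (L (of_real t)) N + cm (M (of_real t)) v)"
  define e where "e = 1 / (cmod k + 1)"
  have k0: "cmod k \<ge> 0" by simp
  have e1: "e > 0" unfolding e_def using k0 by (smt (verit) divide_pos_pos)
  have e2: "e \<le> 1" unfolding e_def using k0 by (smt (verit) divide_le_eq_1)
  note e = e1 e2
  have den: "1 + (of_real t)\<^sup>2 * k \<noteq> 0" if "t \<in> {-e<..<e}" for t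
  proof
    assume h: "1 + (of_real t)\<^sup>2 * k = 0"
    have "\<bar>t\<bar> < e" using that by auto
    then have "t\<^sup>2 < e\<^sup>2" by (simp add: abs_less_iff power2_eq_square)
       (smt (verit) mult_strict_mono mult_minus_left mult_minus_right)
    also have "e\<^sup>2 \<le> e" using e by (simp add: power2_eq_square mult_left_le_one_le)
    finally have t2: "t\<^sup>2 < e" .
    have "1 = cmod ((of_real t)\<^sup>2 * k)" using h by (metis add_eq_0_iff norm_minus_cancel norm_one)
    also have "\<dots> = t\<^sup>2 * cmod k" by (simp add: norm_mult norm_power)
    also have "\<dots> \<le> e * cmod k" using t2 by (simp add: mult_right_mono)
    also have "\<dots> < 1" unfolding e_def by (simp add: divide_less_eq_1) (smt (verit) norm_ge_zero)
    finally show False by simp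
  qed
  have on: "ci (\<gamma> t) (\<gamma> t) = c" if "t \<in> {-e<..<e}" for t
  proof -
    have d: "1 + (of_real t)\<^sup>2 * k \<noteq> 0" using den[OF that] .
    have cc: "c \<noteq> 0" using c c_def by simp
    have "ci (\<gamma> t) (\<gamma> t) = L t * L t * c + M t * M t * ci v v"
      unfolding \<gamma>_def using o
      by (simp add: ci_add_left ci_add_right ci_cm_left ci_cm_right c_def ci_sym[of v N])
    also have "\<dots> = c"
      unfolding L_def M_def using alg[OF d, of "ci v v" c] cc unfolding k_def by simp
    finally show ?thesis .
  qed
  have dL: "(L has_field_derivative 0) (at 0)"
    unfolding L_def by (rule derivative_eq_intros refl | simp)+
  have dM: "(M has_field_derivative 1) (at 0)"
    unfolding M_def by (rule derivative_eq_intros refl | simp)+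
  have "((\<lambda>t::real. L (of_real t)) has_vector_derivative 0) (at 0)"
    using has_vector_derivative_real_field[of L 0 0 UNIV] dL by simp
  from cm_vector_derivative[OF this, of N]
  have 1: "((\<lambda>t::real. cm (L (of_real t)) N) has_vector_derivative 0) (at 0)" by (simp add: cm_0)
  have "((\<lambda>t::real. M (of_real t)) has_vector_derivative 1) (at 0)"
    using has_vector_derivative_real_field[of M 1 0 UNIV] dM by simp
  from cm_vector_derivative[OF this, of v]
  have 2: "((\<lambda>t::real. cm (M (of_real t)) v) has_vector_derivative v) (at 0)" by (simp add: cm_1)
  have "(\<gamma> has_vector_derivative v) (at 0)"
    unfolding \<gamma>_def using has_vector_derivative_add[OF 1 2] by simp
  moreover have "\<gamma> 0 = N" unfolding \<gamma>_def L_def M_def by (simp add: cm_0 cm_1)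
  ultimately show ?thesis using e on c_def by blast
qed

lemma tangent_deriv_unique:
  assumes d1: "(F has_derivative D1) (at p within S)" and d2: "(F has_derivative D2) (at p within S)"
    and v: "v \<in> tangent_space S p"
  shows "D1 v = D2 v"
proof -
  obtain \<gamma> e where e: "e > 0" and g0: "\<gamma> 0 = p" and gS: "\<forall>t\<in>{-e<..<e}. \<gamma> t \<in> S"
    and gd: "(\<gamma> has_vector_derivative v) (at 0)"
    using v unfolding tangent_space_def by blast
  let ?I = "{-e<..<e}"
  have I: "0 \<in> ?I" "open ?I" using e by auto
  have gd': "(\<gamma> has_derivative (\<lambda>x. x *\<^sub>R v)) (at 0 within ?I)"
    using gd by (simp add: has_vector_derivative_def has_derivative_at_withinI)
  have sub: "\<gamma> ` ?I \<subseteq> S" using gS by auto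
  have comp: "((\<lambda>t. F (\<gamma> t)) has_vector_derivative D v) (at 0)"
    if d: "(F has_derivative D) (at p within S)" for D
  proof -
    have "(F has_derivative D) (at (\<gamma> 0) within \<gamma> ` ?I)"
      using has_derivative_subset[OF d sub] g0 by simp
    from has_derivative_in_compose[OF gd' this]
    have "((\<lambda>t. F (\<gamma> t)) has_derivative (\<lambda>x. D (x *\<^sub>R v))) (at 0 within ?I)" .
    then have "((\<lambda>t. F (\<gamma> t)) has_derivative (\<lambda>x. D (x *\<^sub>R v))) (at 0)"
      using at_within_open[OF I] by simp
    moreover have "linear D" using d has_derivative_linear by blast
    ultimately show ?thesis
      by (simp add: has_vector_derivative_def linear_scale)
  qed
  show ?thesis using vector_derivative_unique_at[OF comp[OF d1] comp[OF d2]] .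
qed

lemma frechet_within_tangent:
  assumes "F differentiable (at p)" "v \<in> tangent_space S p"
  shows "frechet_derivative F (at p within S) v = frechet_derivative F (at p) v"
proof -
  have d: "(F has_derivative frechet_derivative F (at p)) (at p)"
    using assms(1) frechet_derivative_works by blast
  then have d1: "(F has_derivative frechet_derivative F (at p)) (at p within S)"
    by (rule has_derivative_at_withinI)
  then have "F differentiable (at p within S)" by (auto simp: differentiable_def)
  then have d2: "(F has_derivative frechet_derivative F (at p within S)) (at p within S)"
    using frechet_derivative_works by blast
  show ?thesis using tangent_deriv_unique[OF d2 d1 assms(2)] .
qed

lemma frechet_within_eq:
  assumes "(F has_derivative D) (at p within S)" "v \<in> tangent_space S p"
  shows "frechet_derivative F (at p within S) v = D v"
proof -
  have "F differentiable (at p within S)" using assms(1) by (auto simp: differentiable_def)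
  then have d2: "(F has_derivative frechet_derivative F (at p within S)) (at p within S)"
    using frechet_derivative_works by blast
  show ?thesis using tangent_deriv_unique[OF d2 assms] .
qed

lemma zero_on_deriv:
  assumes "(F has_derivative D) (at p within S)" "v \<in> tangent_space S p" "p \<in> S"
    and "\<And>q. q \<in> S \<Longrightarrow> F q = c"
  shows "D v = 0"
proof -
  have "((\<lambda>q. c) has_derivative (\<lambda>_. 0)) (at p within S)" by simp
  then have "(F has_derivative (\<lambda>_. 0)) (at p within S)"
    by (rule has_derivative_transform_within[of _ _ _ _ 1]) (use assms in auto)
  from tangent_deriv_unique[OF assms(1) this assms(2)] show ?thesis .
qed

locale hs =
  fixes Z0 :: "'m::finite pt" and a b :: real
  assumes ab: "a\<^sup>2 + b\<^sup>2 > 0"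
begin

abbreviation "S \<equiv> hsphere Z0 a b"
abbreviation "s \<equiv> a\<^sup>2 + b\<^sup>2"

definition tsp :: "'m pt \<Rightarrow> 'm pt set" where
  "tsp p = {v. gN v (p - Z0) = 0 \<and> gN v (Jop (p - Z0)) = 0}"

lemma inS: "p \<in> S \<Longrightarrow> gN (p - Z0) (p - Z0) = a \<and> gN (Jop (p - Z0)) (p - Z0) = b"
  by (simp add: hsphere_def gT_def)

lemma tan_sub:
  assumes p: "p \<in> S" and v: "v \<in> tangent_space S p"
  shows "v \<in> tsp p"
proof -
  have dN: "((\<lambda>q. q - Z0) has_derivative (\<lambda>u. u)) (at p within S)"
    by (rule derivative_eq_intros refl | simp)+
  have dJ: "((\<lambda>q. Jop (q - Z0)) has_derivative (\<lambda>u. Jop u)) (at p within S)"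
    using has_derivative_compose[OF dN bounded_linear_imp_has_derivative[OF bounded_linear_Jop]] .
  have h1: "((\<lambda>q. gN (q - Z0) (q - Z0)) has_derivative (\<lambda>u. gN (p - Z0) u + gN u (p - Z0))) (at p within S)"
    using bounded_bilinear.FDERIV[OF bounded_bilinear_gN dN dN] .
  have h2: "((\<lambda>q. gN (Jop (q - Z0)) (q - Z0)) has_derivative (\<lambda>u. gN (Jop (p - Z0)) u + gN (Jop u) (p - Z0))) (at p within S)"
    using bounded_bilinear.FDERIV[OF bounded_bilinear_gN dJ dN] .
  have "gN (p - Z0) v + gN v (p - Z0) = 0"
    using zero_on_deriv[OF h1 v p, of a] by (simp add: hsphere_def)
  moreover have "gN (Jop (p - Z0)) v + gN (Jop v) (p - Z0) = 0"
    using zero_on_deriv[OF h2 v p, of b] by (simp add: hsphere_def gT_def)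
  ultimately show ?thesis unfolding tsp_def
    by (simp add: gN_sym gN_J_right)
qed

lemma tan_sup:
  assumes p: "p \<in> S" and v: "v \<in> tsp p"
  shows "v \<in> tangent_space S p"
proof -
  let ?N = "p - Z0"
  have cN: "ci ?N ?N = Complex a b" using inS[OF p] by (simp add: ci_def)
  have c0: "ci ?N ?N \<noteq> 0" using cN ab by (auto simp: complex_eq_iff)
  have o: "ci ?N v = 0" using v unfolding tsp_def ci_def
    by (simp add: complex_eq_iff gN_sym)
  obtain \<gamma> e where e: "e > 0" "\<gamma> 0 = ?N" "\<forall>t\<in>{-e<..<e}. ci (\<gamma> t) (\<gamma> t) = ci ?N ?N"
     "(\<gamma> has_vector_derivative v) (at 0)"
    using curve_exists[OF c0 o] by blast
  define \<delta> where "\<delta> = (\<lambda>t. Z0 + \<gamma> t)"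
  have "(\<delta> has_vector_derivative v) (at 0)"
    unfolding \<delta>_def using has_vector_derivative_add[OF has_vector_derivative_const e(4)] by simp
  moreover have "\<delta> 0 = p" using e(2) by (simp add: \<delta>_def)
  moreover have "\<forall>t\<in>{-e<..<e}. \<delta> t \<in> S"
  proof
    fix t assume "t \<in> {-e<..<e}"
    then have "ci (\<gamma> t) (\<gamma> t) = Complex a b" using e(3) cN by simp
    then show "\<delta> t \<in> S" by (simp add: \<delta>_def hsphere_def gT_def ci_def complex_eq_iff)
  qed
  ultimately show ?thesis unfolding tangent_space_def using e(1) by blast
qed

lemma tan_eq: "p \<in> S \<Longrightarrow> tangent_space S p = tsp p"
  using tan_sub tan_sup by blast

end

context hs begin

definition alpha :: "'m pt \<Rightarrow> 'm pt \<Rightarrow> real" where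
  "alpha n w = (a * gN w n + b * gN w (Jop n)) / s"
definition beta :: "'m pt \<Rightarrow> 'm pt \<Rightarrow> real" where
  "beta n w = (b * gN w n - a * gN w (Jop n)) / s"
definition Pr :: "'m pt \<Rightarrow> 'm pt \<Rightarrow> 'm pt" where
  "Pr n w = w - alpha n w *\<^sub>R n - beta n w *\<^sub>R Jop n"

lemma s_pos: "s > 0" using ab .
lemma s_ne: "s \<noteq> 0" using ab by linarith

lemma alpha_add: "alpha n (x + y) = alpha n x + alpha n y"
  by (simp add: alpha_def gN_simps add_divide_distrib algebra_simps)
lemma beta_add: "beta n (x + y) = beta n x + beta n y"
  by (simp add: beta_def gN_simps add_divide_distrib diff_divide_distrib algebra_simps)
lemma alpha_scale: "alpha n (c *\<^sub>R x) = c * alpha n x"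
  by (simp add: alpha_def gN_simps algebra_simps)
lemma beta_scale: "beta n (c *\<^sub>R x) = c * beta n x"
  by (simp add: beta_def gN_simps algebra_simps)

lemma Pr_add: "Pr n (x + y) = Pr n x + Pr n y"
  by (simp add: Pr_def alpha_add beta_add algebra_simps)
lemma Pr_scale: "Pr n (c *\<^sub>R x) = c *\<^sub>R Pr n x"
  by (simp add: Pr_def alpha_scale beta_scale algebra_simps)
lemma linear_Pr: "linear (Pr n)"
  by (rule linearI) (simp_all add: Pr_add Pr_scale)
lemma Pr_diff: "Pr n (x - y) = Pr n x - Pr n y"
  using linear_diff[OF linear_Pr] .
lemma Pr_minus: "Pr n (- x) = - Pr n x"
  using linear_neg[OF linear_Pr] .

context
  fixes p N assumes p: "p \<in> S" and Ndef: "N = p - Z0"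
begin

lemma tspN: "tsp p = {v. gN v N = 0 \<and> gN v (Jop N) = 0}"
  by (simp add: tsp_def Ndef)

lemma NN: "gN N N = a" and JNN: "gN (Jop N) N = b"
  using inS[OF p] Ndef by auto
lemma NJN: "gN N (Jop N) = b" using JNN gN_J_right by (metis gN_sym)
lemma JNJN: "gN (Jop N) (Jop N) = - a" by (metis NN gN_JJ)

lemma coef1: "alpha N w * a + beta N w * b = gN w N"
proof -
  have "a * (a * gN w N + b * gN w (Jop N)) + b * (b * gN w N - a * gN w (Jop N)) = s * gN w N"
    by (simp add: algebra_simps power2_eq_square)
  then show ?thesis unfolding alpha_def beta_def using s_ne
    by (metis (no_types, lifting) add_divide_distrib mult.commute nonzero_mult_div_cancel_left times_divide_eq_left)
qed
lemma coef2: "alpha N w * b - beta N w * a = gN w (Jop N)"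
proof -
  have "b * (a * gN w N + b * gN w (Jop N)) - a * (b * gN w N - a * gN w (Jop N)) = s * gN w (Jop N)"
    by (simp add: algebra_simps power2_eq_square)
  then show ?thesis unfolding alpha_def beta_def using s_ne
    by (metis (no_types, lifting) diff_divide_distrib mult.commute nonzero_mult_div_cancel_left times_divide_eq_left)
qed

lemma Pr_in: "Pr N w \<in> tsp p"
proof -
  have "gN (Pr N w) N = gN w N - (alpha N w * a + beta N w * b)"
    unfolding Pr_def by (simp add: gN_simps NN JNN)
  then have "gN (Pr N w) N = 0" using coef1 by simp
  moreover have "gN (Pr N w) (Jop N) = gN w (Jop N) - (alpha N w * b - beta N w * a)"
    unfolding Pr_def by (simp add: gN_simps NJN JNJN)
  then have "gN (Pr N w) (Jop N) = 0" using coef2 by simp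
  ultimately show ?thesis by (simp add: tspN)
qed

lemma Pr_fix: "v \<in> tsp p \<Longrightarrow> Pr N v = v"
  by (simp add: tspN Pr_def alpha_def beta_def)

lemma Pr_N: "Pr N N = 0"
proof -
  have "alpha N N = 1" "beta N N = 0" unfolding alpha_def beta_def using s_ne
    by (simp_all add: NN NJN power2_eq_square)
  then show ?thesis by (simp add: Pr_def)
qed
lemma Pr_JN: "Pr N (Jop N) = 0"
proof -
  have "alpha N (Jop N) = 0" "beta N (Jop N) = 1" unfolding alpha_def beta_def using s_ne
    by (simp_all add: JNN JNJN power2_eq_square)
  then show ?thesis by (simp add: Pr_def)
qed

lemma tsp_J: "v \<in> tsp p \<Longrightarrow> Jop v \<in> tsp p"
  by (simp add: tspN gN_JJ) (metis gN_J_right gN_sym)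

lemma tsp_add: "v \<in> tsp p \<Longrightarrow> w \<in> tsp p \<Longrightarrow> v + w \<in> tsp p"
  by (simp add: tspN gN_simps)
lemma tsp_diff: "v \<in> tsp p \<Longrightarrow> w \<in> tsp p \<Longrightarrow> v - w \<in> tsp p"
  by (simp add: tspN gN_simps)

lemma Pr_orth: "u \<in> tsp p \<Longrightarrow> gN (w - Pr N w) u = 0"
  by (simp add: Pr_def gN_simps tspN gN_sym)

lemma tanproj_eq: "tanproj S p w = Pr N w"
  unfolding tanproj_def tan_eq[OF p]
proof (rule the_equality)
  show "Pr N w \<in> tsp p \<and> (\<forall>u\<in>tsp p. gN (w - Pr N w) u = 0)"
    using Pr_in Pr_orth by blast
next
  fix t assume t: "t \<in> tsp p \<and> (\<forall>u\<in>tsp p. gN (w - t) u = 0)"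
  define d where "d = t - Pr N w"
  have dT: "d \<in> tsp p" unfolding d_def using t Pr_in tsp_diff by blast
  have dorth: "gN d u = 0" if "u \<in> tsp p" for u
  proof -
    have "gN d u = gN (w - Pr N w) u - gN (w - t) u" unfolding d_def by (simp add: gN_simps)
    then show ?thesis using t that Pr_orth by simp
  qed
  have "gN d e = 0" for e
  proof -
    have "gN d e = gN d (Pr N e) + alpha N e * gN d N + beta N e * gN d (Jop N)"
      by (simp add: Pr_def gN_simps)
    also have "\<dots> = 0" using dorth[OF Pr_in] dT by (simp add: tspN gN_sym)
    finally show ?thesis .
  qed
  then have "d = 0" by (rule gN_nondeg)
  then show "t = Pr N w" by (simp add: d_def)
qed

end
end

lemma second_approx:
  fixes f :: "'a::real_normed_vector \<Rightarrow> 'b::real_inner"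
  assumes df: "\<And>q. f differentiable (at q)"
    and dG: "((\<lambda>r. frechet_derivative f (at r) u) has_derivative A) (at p)"
    and eps: "\<epsilon> > 0"
  shows "\<exists>\<delta>>0. \<forall>t. 0 < t \<and> t < \<delta> \<longrightarrow>
     norm (f (p + t *\<^sub>R u + t *\<^sub>R v) - f (p + t *\<^sub>R u) - f (p + t *\<^sub>R v) + f p - (t*t) *\<^sub>R A v) \<le> \<epsilon> * (t*t)"
proof -
  define Df where "Df = (\<lambda>r. frechet_derivative f (at r))"
  define G where "G = (\<lambda>r. Df r u)"
  have dfr: "(f has_derivative Df r) (at r)" for r
    using df frechet_derivative_works unfolding Df_def by blast
  have linDf: "linear (Df r)" for r using dfr has_derivative_linear by blast
  have bA: "bounded_linear A" using dG has_derivative_bounded_linear by blast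
  then have linA: "linear A" by (rule bounded_linear.linear)
  define K where "K = 2 * norm u + norm v + 1"
  have K: "K > 0" "K \<ge> 1" unfolding K_def by (simp_all add: add_nonneg_pos)
  define e where "e = \<epsilon> / K"
  have e: "e > 0" using eps K by (simp add: e_def)
  obtain d where d: "d > 0" and dd: "\<And>y. norm (y - p) < d \<Longrightarrow> norm (G y - G p - A (y - p)) \<le> e * norm (y - p)"
    using dG e unfolding has_derivative_at_alt G_def Df_def by blast
  define \<delta> where "\<delta> = d / K"
  have \<delta>: "\<delta> > 0" using d K by (simp add: \<delta>_def)
  have main: "norm (f (p + t *\<^sub>R u + t *\<^sub>R v) - f (p + t *\<^sub>R u) - f (p + t *\<^sub>R v) + f p - (t*t) *\<^sub>R A v) \<le> \<epsilon> * (t*t)"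
    if t: "0 < t" "t < \<delta>" for t
  proof -
    define \<psi> where "\<psi> = (\<lambda>s. f (p + s *\<^sub>R u + t *\<^sub>R v) - f (p + s *\<^sub>R u) - (s * t) *\<^sub>R A v)"
    define \<psi>' where "\<psi>' = (\<lambda>s h. h *\<^sub>R (Df (p + s *\<^sub>R u + t *\<^sub>R v) u - Df (p + s *\<^sub>R u) u - t *\<^sub>R A v))"
    have dpsi: "(\<psi> has_derivative \<psi>' s) (at s)" for s
    proof -
      have a1: "((\<lambda>s. p + s *\<^sub>R u + t *\<^sub>R v) has_derivative (\<lambda>h. h *\<^sub>R u)) (at s)"
        by (rule derivative_eq_intros refl | simp)+
      have a2: "((\<lambda>s. p + s *\<^sub>R u) has_derivative (\<lambda>h. h *\<^sub>R u)) (at s)"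
        by (rule derivative_eq_intros refl | simp)+
      have c1: "((\<lambda>s. f (p + s *\<^sub>R u + t *\<^sub>R v)) has_derivative (\<lambda>h. Df (p + s *\<^sub>R u + t *\<^sub>R v) (h *\<^sub>R u))) (at s)"
        using has_derivative_compose[OF a1 dfr] .
      have c2: "((\<lambda>s. f (p + s *\<^sub>R u)) has_derivative (\<lambda>h. Df (p + s *\<^sub>R u) (h *\<^sub>R u))) (at s)"
        using has_derivative_compose[OF a2 dfr] .
      have c3: "((\<lambda>s. (s * t) *\<^sub>R A v) has_derivative (\<lambda>h. (h * t) *\<^sub>R A v)) (at s)"
        by (rule derivative_eq_intros refl | simp)+
      have "(\<psi> has_derivative (\<lambda>h. Df (p + s *\<^sub>R u + t *\<^sub>R v) (h *\<^sub>R u) - Df (p + s *\<^sub>R u) (h *\<^sub>R u) - (h * t) *\<^sub>R A v)) (at s)"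
        unfolding \<psi>_def by (intro has_derivative_diff c1 c2 c3)
      moreover have "(\<lambda>h. Df (p + s *\<^sub>R u + t *\<^sub>R v) (h *\<^sub>R u) - Df (p + s *\<^sub>R u) (h *\<^sub>R u) - (h * t) *\<^sub>R A v) = \<psi>' s"
        unfolding \<psi>'_def by (auto simp: fun_eq_iff linear_scale[OF linDf] algebra_simps)
      ultimately show ?thesis by simp
    qed
    have cont: "continuous_on {0..t} \<psi>"
      using dpsi by (meson has_derivative_continuous continuous_at_imp_continuous_on)
    obtain \<xi> where \<xi>: "\<xi> \<in> {0<..<t}" and mv: "norm (\<psi> t - \<psi> 0) \<le> norm (\<psi>' \<xi> (t - 0))"
      using mvt_general[OF t(1) cont dpsi] by blast
    have tK: "t * K < d" using t K by (simp add: \<delta>_def pos_less_divide_eq)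
    define r1 where "r1 = p + \<xi> *\<^sub>R u + t *\<^sub>R v"
    define r2 where "r2 = p + \<xi> *\<^sub>R u"
    have n1: "norm (r1 - p) \<le> t * (norm u + norm v)"
    proof -
      have "norm (r1 - p) \<le> norm (\<xi> *\<^sub>R u) + norm (t *\<^sub>R v)" unfolding r1_def
        by (metis add_diff_cancel_left' norm_triangle_ineq add.assoc)
      also have "\<dots> \<le> t * norm u + t * norm v" using \<xi> t by (simp add: mult_right_mono)
      finally show ?thesis by (simp add: algebra_simps)
    qed
    have n2: "norm (r2 - p) \<le> t * norm u"
      unfolding r2_def using \<xi> t by (simp add: mult_right_mono)
    have l1: "norm (r1 - p) < d" using n1 tK K_def t
      by (smt (verit, best) mult_left_mono norm_ge_zero)
    have l2: "norm (r2 - p) < d" using n2 tK K_def t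
      by (smt (verit, best) mult_left_mono norm_ge_zero)
    have eqA: "G r1 - G r2 - t *\<^sub>R A v = (G r1 - G p - A (r1 - p)) - (G r2 - G p - A (r2 - p))"
    proof -
      have "A (r1 - p) - A (r2 - p) = t *\<^sub>R A v"
        unfolding r1_def r2_def by (simp add: linear_add[OF linA] linear_scale[OF linA])
      then show ?thesis by (simp add: algebra_simps)
    qed
    have "norm (G r1 - G r2 - t *\<^sub>R A v) \<le> e * norm (r1 - p) + e * norm (r2 - p)"
      unfolding eqA using dd[OF l1] dd[OF l2] by (smt (verit) norm_triangle_ineq4)
    also have "\<dots> \<le> e * (t * (norm u + norm v)) + e * (t * norm u)"
      using n1 n2 e by (intro add_mono mult_left_mono) auto
    also have "\<dots> \<le> e * (t * K)" unfolding K_def using e t by (simp add: algebra_simps)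
    also have "\<dots> = \<epsilon> * t" using K by (simp add: e_def)
    finally have inner: "norm (G r1 - G r2 - t *\<^sub>R A v) \<le> \<epsilon> * t" .
    have "norm (\<psi>' \<xi> (t - 0)) = t * norm (G r1 - G r2 - t *\<^sub>R A v)"
      unfolding \<psi>'_def G_def r1_def r2_def using t by simp
    also have "\<dots> \<le> t * (\<epsilon> * t)" using inner t by (simp add: mult_left_mono)
    finally have "norm (\<psi> t - \<psi> 0) \<le> \<epsilon> * (t * t)" using mv by (simp add: algebra_simps)
    moreover have "\<psi> t - \<psi> 0 = f (p + t *\<^sub>R u + t *\<^sub>R v) - f (p + t *\<^sub>R u) - f (p + t *\<^sub>R v) + f p - (t*t) *\<^sub>R A v"
      unfolding \<psi>_def by (simp add: algebra_simps)
    ultimately show ?thesis by simp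
  qed
  show ?thesis using \<delta> main by blast
qed

lemma second_sym:
  fixes f :: "'a::real_normed_vector \<Rightarrow> 'b::real_inner"
  assumes df: "\<And>q. f differentiable (at q)"
    and d2: "\<And>w. (\<lambda>r. frechet_derivative f (at r) w) differentiable (at p)"
  shows "frechet_derivative (\<lambda>r. frechet_derivative f (at r) u) (at p) v
       = frechet_derivative (\<lambda>r. frechet_derivative f (at r) v) (at p) u"
proof -
  define Au where "Au = frechet_derivative (\<lambda>r. frechet_derivative f (at r) u) (at p)"
  define Av where "Av = frechet_derivative (\<lambda>r. frechet_derivative f (at r) v) (at p)"
  have du: "((\<lambda>r. frechet_derivative f (at r) u) has_derivative Au) (at p)"
    using d2 frechet_derivative_works unfolding Au_def by blast
  have dv: "((\<lambda>r. frechet_derivative f (at r) v) has_derivative Av) (at p)"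
    using d2 frechet_derivative_works unfolding Av_def by blast
  define D where "D = Au v - Av u"
  have "norm D \<le> 2 * \<epsilon>" if eps: "\<epsilon> > 0" for \<epsilon>
  proof -
    obtain \<delta>1 where d1: "\<delta>1 > 0" and h1: "\<And>t. 0 < t \<and> t < \<delta>1 \<Longrightarrow>
       norm (f (p + t *\<^sub>R u + t *\<^sub>R v) - f (p + t *\<^sub>R u) - f (p + t *\<^sub>R v) + f p - (t*t) *\<^sub>R Au v) \<le> \<epsilon> * (t*t)"
      using second_approx[OF df du eps, of v] by blast
    obtain \<delta>2 where d2': "\<delta>2 > 0" and h2: "\<And>t. 0 < t \<and> t < \<delta>2 \<Longrightarrow>
       norm (f (p + t *\<^sub>R v + t *\<^sub>R u) - f (p + t *\<^sub>R v) - f (p + t *\<^sub>R u) + f p - (t*t) *\<^sub>R Av u) \<le> \<epsilon> * (t*t)"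
      using second_approx[OF df dv eps, of u] by blast
    define t where "t = min \<delta>1 \<delta>2 / 2"
    have t: "0 < t" "t < \<delta>1" "t < \<delta>2" using d1 d2' by (auto simp: t_def)
    define X where "X = f (p + t *\<^sub>R u + t *\<^sub>R v) - f (p + t *\<^sub>R u) - f (p + t *\<^sub>R v) + f p"
    have X2: "f (p + t *\<^sub>R v + t *\<^sub>R u) - f (p + t *\<^sub>R v) - f (p + t *\<^sub>R u) + f p = X"
      unfolding X_def by (simp add: algebra_simps)
    have a1: "norm (X - (t*t) *\<^sub>R Au v) \<le> \<epsilon> * (t*t)" using h1 t unfolding X_def by blast
    have a2: "norm (X - (t*t) *\<^sub>R Av u) \<le> \<epsilon> * (t*t)" using h2[of t] t X2 by simp
    have "(t*t) *\<^sub>R D = (X - (t*t) *\<^sub>R Av u) - (X - (t*t) *\<^sub>R Au v)"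
      unfolding D_def by (simp add: algebra_simps)
    then have "norm ((t*t) *\<^sub>R D) \<le> norm (X - (t*t) *\<^sub>R Av u) + norm (X - (t*t) *\<^sub>R Au v)"
      by (metis norm_triangle_ineq4)
    then have "norm ((t*t) *\<^sub>R D) \<le> 2 * \<epsilon> * (t*t)"
      using a1 a2 by linarith
    then have "(t*t) * norm D \<le> (t*t) * (2 * \<epsilon>)" using t by (simp add: algebra_simps)
    then show ?thesis using t by (simp add: mult_le_cancel_left_pos)
  qed
  then have "norm D = 0"
    by (metis dense_le_bounded linorder_not_less mult_2 norm_ge_zero field_sum_of_halves half_gt_zero order_antisym)
  then show ?thesis unfolding D_def Au_def Av_def by simp
qed

abbreviation fd :: "('m::finite pt \<Rightarrow> 'm pt) \<Rightarrow> 'm pt \<Rightarrow> 'm pt \<Rightarrow> 'm pt" where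
  "fd Z r \<equiv> frechet_derivative Z (at r)"

lemma C2_diff: "C2field Z \<Longrightarrow> (Z has_derivative fd Z r) (at r)"
  unfolding C2field_def using frechet_derivative_works by blast
lemma C2_lin: "C2field Z \<Longrightarrow> linear (fd Z r)"
  using C2_diff has_derivative_linear by blast
lemma C2_diff2: "C2field Z \<Longrightarrow> ((\<lambda>r. fd Z r v) has_derivative frechet_derivative (\<lambda>r. fd Z r v) (at q)) (at q)"
  unfolding C2field_def using frechet_derivative_works by blast

lemma C2_sym: "C2field Z \<Longrightarrow>
  frechet_derivative (\<lambda>r. fd Z r u) (at p) v = frechet_derivative (\<lambda>r. fd Z r v) (at p) u"
  unfolding C2field_def by (rule second_sym) blast+

lemma lin_rep: "linear L \<Longrightarrow> L w = (\<Sum>i\<in>Basis. (w \<bullet> i) *\<^sub>R L i)"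
proof -
  assume l: "linear L"
  have "L w = L (\<Sum>i\<in>Basis. (w \<bullet> i) *\<^sub>R i)" by (simp add: euclidean_representation)
  also have "\<dots> = (\<Sum>i\<in>Basis. (w \<bullet> i) *\<^sub>R L i)" by (simp add: linear_sum[OF l] linear_scale[OF l])
  finally show ?thesis .
qed

lemma W_deriv:
  fixes Y Z :: "'m::finite pt \<Rightarrow> 'm pt"
  assumes Y: "C2field Y" and Z: "C2field Z"
  shows "((\<lambda>q. fd Z q (Y q)) has_derivative
           (\<lambda>u. fd Z p (fd Y p u) + frechet_derivative (\<lambda>r. fd Z r (Y p)) (at p) u)) (at p)"
proof -
  define H where "H = (\<lambda>i. frechet_derivative (\<lambda>r. fd Z r i) (at p))"
  have Hd: "((\<lambda>r. fd Z r i) has_derivative H i) (at p)" for i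
    unfolding H_def using C2_diff2[OF Z] .
  have eq: "(\<lambda>q. fd Z q (Y q)) = (\<lambda>q. \<Sum>i\<in>Basis. (Y q \<bullet> i) *\<^sub>R fd Z q i)"
    by (rule ext) (rule lin_rep[OF C2_lin[OF Z]])
  have d1: "((\<lambda>q. \<Sum>i\<in>Basis. (Y q \<bullet> i) *\<^sub>R fd Z q i) has_derivative
      (\<lambda>u. \<Sum>i\<in>Basis. (Y p \<bullet> i) *\<^sub>R H i u + (fd Y p u \<bullet> i) *\<^sub>R fd Z p i)) (at p)"
    by (intro has_derivative_sum has_derivative_scaleR Hd has_derivative_inner_left C2_diff[OF Y])
  have eq2: "(\<lambda>r. fd Z r (Y p)) = (\<lambda>r. \<Sum>i\<in>Basis. (Y p \<bullet> i) *\<^sub>R fd Z r i)"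
    by (rule ext) (rule lin_rep[OF C2_lin[OF Z]])
  have d2: "((\<lambda>r. fd Z r (Y p)) has_derivative (\<lambda>u. \<Sum>i\<in>Basis. (Y p \<bullet> i) *\<^sub>R H i u)) (at p)"
    unfolding eq2 by (intro has_derivative_sum has_derivative_scaleR_right Hd)
  have d3: "((\<lambda>r. fd Z r (Y p)) has_derivative frechet_derivative (\<lambda>r. fd Z r (Y p)) (at p)) (at p)"
    using C2_diff2[OF Z] .
  have u1: "(\<lambda>u. \<Sum>i\<in>Basis. (Y p \<bullet> i) *\<^sub>R H i u) = frechet_derivative (\<lambda>r. fd Z r (Y p)) (at p)"
    using has_derivative_unique[OF d2 d3] .
  have "(\<lambda>u. \<Sum>i\<in>Basis. (Y p \<bullet> i) *\<^sub>R H i u + (fd Y p u \<bullet> i) *\<^sub>R fd Z p i)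
      = (\<lambda>u. fd Z p (fd Y p u) + frechet_derivative (\<lambda>r. fd Z r (Y p)) (at p) u)"
  proof
    fix u
    have "(\<Sum>i\<in>Basis. (Y p \<bullet> i) *\<^sub>R H i u + (fd Y p u \<bullet> i) *\<^sub>R fd Z p i)
       = (\<Sum>i\<in>Basis. (Y p \<bullet> i) *\<^sub>R H i u) + (\<Sum>i\<in>Basis. (fd Y p u \<bullet> i) *\<^sub>R fd Z p i)"
      by (simp add: sum.distrib)
    also have "(\<Sum>i\<in>Basis. (fd Y p u \<bullet> i) *\<^sub>R fd Z p i) = fd Z p (fd Y p u)"
      by (rule lin_rep[OF C2_lin[OF Z], symmetric])
    finally show "(\<Sum>i\<in>Basis. (Y p \<bullet> i) *\<^sub>R H i u + (fd Y p u \<bullet> i) *\<^sub>R fd Z p i)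
      = fd Z p (fd Y p u) + frechet_derivative (\<lambda>r. fd Z r (Y p)) (at p) u"
      using fun_cong[OF u1, of u] by simp
  qed
  then show ?thesis using d1 eq by simp
qed

lemma Jop_deriv: "(f has_derivative f') F \<Longrightarrow> ((\<lambda>x. Jop (f x)) has_derivative (\<lambda>x. Jop (f' x))) F"
  by (rule bounded_linear.has_derivative[OF bounded_linear_Jop])
lemmas gN_deriv = bounded_bilinear.FDERIV[OF bounded_bilinear_gN]

context hs begin

lemma tfield_tsp: "tfield S Z \<Longrightarrow> q \<in> S \<Longrightarrow> Z q \<in> tsp q"
  unfolding tfield_def using tan_eq by blast

lemma normal_comp:
  assumes Z: "tfield S Z" and p: "p \<in> S" and v: "v \<in> tsp p"
  shows "gN (fd Z p v) (p - Z0) = - gN (Z p) v"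
    and "gN (fd Z p v) (Jop (p - Z0)) = - gN (Z p) (Jop v)"
proof -
  have C: "C2field Z" using Z tfield_def by blast
  have vt: "v \<in> tangent_space S p" using v tan_eq[OF p] by simp
  have dZ: "(Z has_derivative fd Z p) (at p within S)"
    using C2_diff[OF C] has_derivative_at_withinI by blast
  have dN: "((\<lambda>q. q - Z0) has_derivative (\<lambda>u. u)) (at p within S)"
    by (rule derivative_eq_intros refl | simp)+
  have h1: "((\<lambda>q. gN (Z q) (q - Z0)) has_derivative (\<lambda>u. gN (Z p) u + gN (fd Z p u) (p - Z0))) (at p within S)"
    using gN_deriv[OF dZ dN] .
  have h2: "((\<lambda>q. gN (Z q) (Jop (q - Z0))) has_derivative (\<lambda>u. gN (Z p) (Jop u) + gN (fd Z p u) (Jop (p - Z0)))) (at p within S)"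
    using gN_deriv[OF dZ Jop_deriv[OF dN]] .
  have z1: "gN (Z q) (q - Z0) = 0" if "q \<in> S" for q using tfield_tsp[OF Z that] by (simp add: tsp_def)
  have z2: "gN (Z q) (Jop (q - Z0)) = 0" if "q \<in> S" for q using tfield_tsp[OF Z that] by (simp add: tsp_def)
  show "gN (fd Z p v) (p - Z0) = - gN (Z p) v"
    using zero_on_deriv[OF h1 vt p, of 0] z1 by simp
  show "gN (fd Z p v) (Jop (p - Z0)) = - gN (Z p) (Jop v)"
    using zero_on_deriv[OF h2 vt p, of 0] z2 by simp
qed

lemma cov_eq:
  assumes Y: "tfield S Y" and Z: "tfield S Z" and q: "q \<in> S"
  shows "cov S Y Z q = Pr (q - Z0) (fd Z q (Y q))"
proof -
  have "Z differentiable (at q)" using Z unfolding tfield_def C2field_def by blast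
  moreover have "Y q \<in> tangent_space S q" using Y q unfolding tfield_def by blast
  ultimately have "frechet_derivative Z (at q within S) (Y q) = fd Z q (Y q)"
    by (rule frechet_within_tangent)
  then show ?thesis unfolding cov_def using tanproj_eq[OF q refl] by simp
qed

end

context hs begin

context
  fixes p N assumes p: "p \<in> S" and Ndef: "N = p - Z0"
begin

lemma cov2:
  assumes X: "tfield S X" and Y: "tfield S Y" and Z: "tfield S Z"
  shows "cov S X (cov S Y Z) p = Pr N (fd Z p (fd Y p (X p)) + frechet_derivative (\<lambda>r. fd Z r (Y p)) (at p) (X p))
            - alpha N (fd Z p (Y p)) *\<^sub>R X p - beta N (fd Z p (Y p)) *\<^sub>R Jop (X p)"
proof -
  have CY: "C2field Y" and CZ: "C2field Z" using Y Z tfield_def by blast+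
  define W where "W = (\<lambda>q. fd Z q (Y q))"
  define W' where "W' = (\<lambda>u. fd Z p (fd Y p u) + frechet_derivative (\<lambda>r. fd Z r (Y p)) (at p) u)"
  have dW: "(W has_derivative W') (at p within S)"
    unfolding W_def W'_def using W_deriv[OF CY CZ] has_derivative_at_withinI by blast
  have dN: "((\<lambda>q. q - Z0) has_derivative (\<lambda>u. u)) (at p within S)"
    by (rule derivative_eq_intros refl | simp)+
  define \<alpha> where "\<alpha> = (\<lambda>q. alpha (q - Z0) (W q))"
  define \<beta> where "\<beta> = (\<lambda>q. beta (q - Z0) (W q))"
  have "\<exists>D. (\<alpha> has_derivative D) (at p within S)"
    unfolding \<alpha>_def alpha_def divide_inverse
    by (rule exI, (rule has_derivative_mult_left has_derivative_add has_derivative_mult_right gN_deriv dW dN Jop_deriv)+)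
  then obtain d\<alpha> where da: "(\<alpha> has_derivative d\<alpha>) (at p within S)" by blast
  have "\<exists>D. (\<beta> has_derivative D) (at p within S)"
    unfolding \<beta>_def beta_def divide_inverse
    by (rule exI, (rule has_derivative_mult_left has_derivative_diff has_derivative_mult_right gN_deriv dW dN Jop_deriv)+)
  then obtain d\<beta> where db: "(\<beta> has_derivative d\<beta>) (at p within S)" by blast
  define F where "F = (\<lambda>q. W q - \<alpha> q *\<^sub>R (q - Z0) - \<beta> q *\<^sub>R Jop (q - Z0))"
  define DF where "DF = (\<lambda>u. W' u - (\<alpha> p *\<^sub>R u + d\<alpha> u *\<^sub>R N) - (\<beta> p *\<^sub>R Jop u + d\<beta> u *\<^sub>R Jop N))"
  have dF: "(F has_derivative DF) (at p within S)"
    unfolding F_def DF_def Ndef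
    by (intro has_derivative_diff has_derivative_scaleR dW da db dN Jop_deriv)
  have eqF: "cov S Y Z q = F q" if "q \<in> S" for q
    unfolding cov_eq[OF Y Z that] F_def \<alpha>_def \<beta>_def Pr_def W_def by simp
  have dC: "(cov S Y Z has_derivative DF) (at p within S)"
    by (rule has_derivative_transform_within[OF dF zero_less_one p]) (simp add: eqF)
  have Xt: "X p \<in> tangent_space S p" using X p unfolding tfield_def by blast
  have Xs: "X p \<in> tsp p" using Xt tan_eq[OF p] by simp
  have "cov S X (cov S Y Z) p = Pr N (DF (X p))"
    unfolding cov_def frechet_within_eq[OF dC Xt] tanproj_eq[OF p Ndef] ..
  also have "\<dots> = Pr N (W' (X p)) - \<alpha> p *\<^sub>R X p - \<beta> p *\<^sub>R Jop (X p)"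
    unfolding DF_def
    by (simp add: Pr_add Pr_diff Pr_scale Pr_N[OF p Ndef] Pr_JN[OF p Ndef]
        Pr_fix[OF p Ndef Xs] Pr_fix[OF p Ndef tsp_J[OF p Ndef Xs]])
  finally show ?thesis unfolding W'_def \<alpha>_def \<beta>_def W_def Ndef .
qed

lemma lie_val:
  assumes X: "tfield S X" and Y: "tfield S Y"
  shows "lie S X Y p = fd Y p (X p) - fd X p (Y p)" and "lie S X Y p \<in> tsp p"
proof -
  have CX: "C2field X" and CY: "C2field Y" using X Y tfield_def by blast+
  have Xt: "X p \<in> tangent_space S p" and Yt: "Y p \<in> tangent_space S p"
    using X Y p unfolding tfield_def by blast+
  show l: "lie S X Y p = fd Y p (X p) - fd X p (Y p)"
    unfolding lie_def
    using frechet_within_tangent[OF _ Xt, of Y] frechet_within_tangent[OF _ Yt, of X] CX CY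
    unfolding C2field_def by simp
  have Xs: "X p \<in> tsp p" and Ys: "Y p \<in> tsp p" using Xt Yt tan_eq[OF p] by auto
  note n1 = normal_comp[OF Y p Xs] and n2 = normal_comp[OF X p Ys]
  show "lie S X Y p \<in> tsp p"
    unfolding l tsp_def using n1 n2
    by (simp add: gN_simps gN_sym) (metis gN_J_swap)
qed

lemma cov_lie:
  assumes X: "tfield S X" and Y: "tfield S Y" and Z: "tfield S Z"
  shows "cov S (lie S X Y) Z p = Pr N (fd Z p (fd Y p (X p)) - fd Z p (fd X p (Y p)))"
proof -
  have CZ: "C2field Z" using Z tfield_def by blast
  have lt: "lie S X Y p \<in> tangent_space S p" using lie_val(2)[OF X Y] tan_eq[OF p] by simp
  have "frechet_derivative Z (at p within S) (lie S X Y p) = fd Z p (lie S X Y p)"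
    using frechet_within_tangent[OF _ lt] CZ unfolding C2field_def by blast
  also have "\<dots> = fd Z p (fd Y p (X p)) - fd Z p (fd X p (Y p))"
    unfolding lie_val(1)[OF X Y] using linear_diff[OF C2_lin[OF CZ]] .
  finally show ?thesis unfolding cov_def tanproj_eq[OF p Ndef] by simp
qed

lemma curv_formula:
  assumes X: "tfield S X" and Y: "tfield S Y" and Z: "tfield S Z"
  shows "curv S X Y Z p = alpha N (fd Z p (X p)) *\<^sub>R Y p + beta N (fd Z p (X p)) *\<^sub>R Jop (Y p)
             - alpha N (fd Z p (Y p)) *\<^sub>R X p - beta N (fd Z p (Y p)) *\<^sub>R Jop (X p)"
proof -
  have CZ: "C2field Z" using Z tfield_def by blast
  have sym: "frechet_derivative (\<lambda>r. fd Z r (Y p)) (at p) (X p) = frechet_derivative (\<lambda>r. fd Z r (X p)) (at p) (Y p)"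
    using C2_sym[OF CZ] .
  show ?thesis
    unfolding curv_def cov2[OF X Y Z] cov2[OF Y X Z] cov_lie[OF X Y Z] sym
    by (simp add: Pr_add Pr_diff algebra_simps)
qed

end
end

lemma orth_span:
  assumes "\<And>w. w \<in> B \<Longrightarrow> gN u w = 0" and "w \<in> span B"
  shows "gN u w = 0"
  using assms(2)
proof (induction rule: span_induct_alt)
  case base then show ?case by (simp add: gN_simps)
next
  case (step c x y) then show ?case using assms(1) by (simp add: gN_simps)
qed

lemma dim_le1: "y \<in> span {x} \<Longrightarrow> dim (span {x, y}) \<le> 1"
proof -
  assume "y \<in> span {x}"
  then have "span {x, y} = span {x}" using span_redundant[of y "{x}"] by (simp add: insert_commute)
  then have "dim (span {x, y}) = dim {x}" by simp
  also have "\<dots> \<le> card {x}" by (rule dim_le_card) (auto intro: span_base)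
  finally show ?thesis by simp
qed

lemma pi1_ne:
  assumes nd: "nondeg_plane x y"
  shows "gN y y * gN x x - gN x y * gN y x \<noteq> 0"
proof
  assume z: "gN y y * gN x x - gN x y * gN y x = 0"
  have d2: "dim (span {x, y}) = 2" and nd': "\<And>u. u \<in> span {x, y} \<Longrightarrow> (\<forall>w\<in>span {x, y}. gN u w = 0) \<Longrightarrow> u = 0"
    using nd unfolding nondeg_plane_def by blast+
  have xs: "x \<in> span {x, y}" and ys: "y \<in> span {x, y}" by (auto intro: span_base)
  show False
  proof (cases "gN x x = 0")
    case True
    then have "gN x y = 0" using z by (simp add: gN_sym)
    note xy = this
    have "gN x w = 0" if w: "w \<in> span {x, y}" for w
    proof (rule orth_span[OF _ w])
      fix v assume "v \<in> {x, y}" then show "gN x v = 0" using True xy by auto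
    qed
    then have "\<forall>w\<in>span {x, y}. gN x w = 0" by blast
    then have "x = 0" using nd' xs by blast
    then have "x \<in> span {y}" by (simp add: span_zero)
    then have "dim (span {y, x}) \<le> 1" by (rule dim_le1)
    then show False using d2 by (simp add: insert_commute)
  next
    case False
    define u where "u = gN x y *\<^sub>R x - gN x x *\<^sub>R y"
    have us: "u \<in> span {x, y}" unfolding u_def using xs ys by (intro span_diff span_scale)
    have "gN u x = 0" unfolding u_def by (simp add: gN_simps gN_sym)
    moreover have "gN u y = 0" unfolding u_def using z by (simp add: gN_simps gN_sym algebra_simps)
    ultimately have uxy: "gN u x = 0 \<and> gN u y = 0" by blast
    have "gN u w = 0" if w: "w \<in> span {x, y}" for w
    proof (rule orth_span[OF _ w])
      fix v assume "v \<in> {x, y}" then show "gN u v = 0" using uxy by auto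
    qed
    then have "\<forall>w\<in>span {x, y}. gN u w = 0" by blast
    then have "u = 0" using nd' us by blast
    then have e: "gN x x *\<^sub>R y = gN x y *\<^sub>R x" unfolding u_def by simp
    have "y = (1 / gN x x) *\<^sub>R (gN x x *\<^sub>R y)" using False by simp
    also have "\<dots> = (gN x y / gN x x) *\<^sub>R x" unfolding e by simp
    finally have "y = (gN x y / gN x x) *\<^sub>R x" .
    then have "y \<in> span {x}" by (metis span_base span_scale singletonI)
    then have "dim (span {x, y}) \<le> 1" by (rule dim_le1)
    then show False using d2 by simp
  qed
qed

context hs begin

lemma K_values:
  assumes p: "p \<in> S" and X: "tfield S X" and Y: "tfield S Y"
    and nd: "nondeg_plane (X p) (Y p)" and tr: "totally_real (X p) (Y p)"
  shows "Kcurv S X Y p = a / s" and "Ktcurv S X Y p = - b / s"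
proof -
  define N where "N = p - Z0"
  define x where "x = X p"
  define y where "y = Y p"
  have xs: "x \<in> tsp p" and ys: "y \<in> tsp p" using X Y p tan_eq[OF p] unfolding tfield_def x_def y_def by auto
  have o: "\<And>u w. u \<in> span {x, y} \<Longrightarrow> w \<in> span {Jop x, Jop y} \<Longrightarrow> gN u w = 0"
    using tr unfolding totally_real_def x_def y_def by blast
  have t1: "gN y (Jop x) = 0" and t2: "gN y (Jop y) = 0" and t3: "gN x (Jop x) = 0"
    by (auto intro!: o span_base)
  have t1': "gN (Jop y) x = 0" using t1 by (metis gN_J_right gN_J_sym)
  have t3': "gN (Jop x) x = 0" using t3 by (metis gN_J_right gN_J_sym)
  note nx = normal_comp[OF Y p xs, folded N_def y_def]
  note ny = normal_comp[OF Y p ys, folded N_def y_def]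
  define ka where "ka = a / s"
  define kb where "kb = b / s"
  have ax: "alpha N (fd Y p x) = - (ka * gN x y)" unfolding alpha_def ka_def using nx t1 by (simp add: gN_sym)
  have bx: "beta N (fd Y p x) = - (kb * gN x y)" unfolding beta_def kb_def using nx t1 by (simp add: gN_sym)
  have ay: "alpha N (fd Y p y) = - (ka * gN y y)" unfolding alpha_def ka_def using ny t2 by simp
  have by': "beta N (fd Y p y) = - (kb * gN y y)" unfolding beta_def kb_def using ny t2 by simp
  have c: "curv S X Y Y p = (- (ka * gN x y)) *\<^sub>R y + (- (kb * gN x y)) *\<^sub>R Jop y
        - (- (ka * gN y y)) *\<^sub>R x - (- (kb * gN y y)) *\<^sub>R Jop x"
    using curv_formula[OF p N_def X Y Y] unfolding x_def[symmetric] y_def[symmetric] ax bx ay by' .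
  define P where "P = gN y y * gN x x - gN x y * gN y x"
  have P0: "P \<noteq> 0" using pi1_ne[OF nd] unfolding P_def x_def y_def .
  have pi: "pi1 x y y x = P" unfolding pi1_def P_def ..
  have g1: "gN (curv S X Y Y p) x = ka * P"
    unfolding c P_def using t1' t3' by (simp add: gN_simps gN_sym algebra_simps)
  have g2: "gN (curv S X Y Y p) (Jop x) = (- kb) * P"
    unfolding c P_def using t1 t3 by (simp add: gN_simps gN_sym gN_JJ algebra_simps)
  show "Kcurv S X Y p = a / s" unfolding Kcurv_def x_def[symmetric] y_def[symmetric] pi g1 ka_def using P0 by simp
  show "Ktcurv S X Y p = - b / s" unfolding Ktcurv_def x_def[symmetric] y_def[symmetric] pi g2 kb_def using P0 by simp
qed

end

theorem theorem3p2:
  fixes Z0 :: "(real^'m::finite) \<times> (real^'m)" and \<nu> \<nu>' :: real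
  assumes "CARD('m) \<ge> 3"
    and "\<nu>\<^sup>2 + \<nu>'\<^sup>2 > 0"
  shows "const_tr_curv (hsphere Z0 (\<nu> / (\<nu>\<^sup>2 + \<nu>'\<^sup>2)) (- \<nu>' / (\<nu>\<^sup>2 + \<nu>'\<^sup>2))) \<nu> \<nu>'"
proof -
  define D where "D = \<nu>\<^sup>2 + \<nu>'\<^sup>2"
  have D: "D > 0" using assms(2) D_def by simp
  define a where "a = \<nu> / D"
  define b where "b = - \<nu>' / D"
  have "a\<^sup>2 + b\<^sup>2 = D / D\<^sup>2" unfolding a_def b_def D_def
    by (simp add: power_divide add_divide_distrib)
  also have "\<dots> = 1 / D" using D by (simp add: power2_eq_square)
  finally have s: "a\<^sup>2 + b\<^sup>2 = 1 / D" .
  interpret hs Z0 a b by unfold_locales (use s D in simp)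
  have 1: "a / (a\<^sup>2 + b\<^sup>2) = \<nu>"
  proof -
    have "a / (a\<^sup>2 + b\<^sup>2) = a * D" by (simp add: s)
    also have "\<dots> = \<nu>" using D by (simp add: a_def)
    finally show ?thesis .
  qed
  have 2: "- b / (a\<^sup>2 + b\<^sup>2) = \<nu>'"
  proof -
    have "- b / (a\<^sup>2 + b\<^sup>2) = - b * D" by (simp add: s)
    also have "\<dots> = \<nu>'" using D by (simp add: b_def)
    finally show ?thesis .
  qed
  show ?thesis unfolding const_tr_curv_def D_def[symmetric] a_def[symmetric] b_def[symmetric]
  proof (intro ballI allI impI)
    fix p X Y assume p: "p \<in> hsphere Z0 a b"
      and h: "tfield (hsphere Z0 a b) X \<and> tfield (hsphere Z0 a b) Y \<and> nondeg_plane (X p) (Y p) \<and> totally_real (X p) (Y p)"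
    show "Kcurv (hsphere Z0 a b) X Y p = \<nu> \<and> Ktcurv (hsphere Z0 a b) X Y p = \<nu>'"
      using K_values[OF p] h 1 2 by simp
  qed
qed

end
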